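(* Let $\mathcal{A}$ be an alphabet with at least three letters. Then every steady word over $\mathcal{A}$ is bifurcate over $\mathcal{A}$.
   Context: A factor of a word $W$ is a contiguous subword. A square is a nonempty word of the form $XX$; a word is square-free if it has no factor that is a square. For a word $W$ of length $n$ and $0\le i\le n$, let $P_i(W)$ and $S_i(W)$ be the prefix and suffix of $W$ of length $i$. An extension of $W$ at position $i$ (over $\mathcal{A}$) is a word $P_i(W)\mathtt{x}S_{n-i}(W)$ with $\mathtt{x}\in\mathcal{A}$. A square-free word $W$ is steady if every word obtained from $W$ by deleting exactly one letter (at any position) is square-free. A square-free word $W$ of length $n$ is bifurcate over $\mathcal{A}$ if for every position $i\in\{0,1,\dots,n\}$ there is a letter $\mathtt{x}\in\mathcal{A}$ such that the extension $P_i(W)\mathtt{x}S_{n-i}(W)$ is square-free. *)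

theory Defs
  imports Main
begin

definition is_square :: "'a list \<Rightarrow> bool" where
  "is_square w \<longleftrightarrow> (\<exists>x. x \<noteq> [] \<and> w = x @ x)"

definition is_factor :: "'a list \<Rightarrow> 'a list \<Rightarrow> bool" where
  "is_factor u w \<longleftrightarrow> (\<exists>p s. w = p @ u @ s)"

definition square_free :: "'a list \<Rightarrow> bool" where
  "square_free w \<longleftrightarrow> \<not> (\<exists>u. is_factor u w \<and> is_square u)"

definition P :: "nat \<Rightarrow> 'a list \<Rightarrow> 'a list" where
  "P i w = take i w"

definition S :: "nat \<Rightarrow> 'a list \<Rightarrow> 'a list" where
  "S i w = drop (length w - i) w"

definition extension :: "'a list \<Rightarrow> nat \<Rightarrow> 'a \<Rightarrow> 'a list" where
  "extension w i x = P i w @ [x] @ S (length w - i) w"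

definition steady :: "'a list \<Rightarrow> bool" where
  "steady w \<longleftrightarrow> square_free w \<and>
     (\<forall>i < length w. square_free (take i w @ drop (Suc i) w))"

definition bifurcate :: "'a set \<Rightarrow> 'a list \<Rightarrow> bool" where
  "bifurcate A w \<longleftrightarrow> square_free w \<and>
     (\<forall>i \<le> length w. \<exists>x \<in> A. square_free (extension w i x))"

end

theory Submission
  imports Defs
begin

lemma del_lem: "take (length A) (A@x#B) @ drop (Suc (length A)) (A@x#B) = A@B"
  by simp

lemma sq_fac:
  assumes "Y \<noteq> []" "W = p@Y@Y@s" shows "\<not> square_free W"
proof -
  have "is_factor (Y@Y) W" unfolding is_factor_def using assms(2) by auto
  moreover have "is_square (Y@Y)" unfolding is_square_def using assms(1) by auto
  ultimately show ?thesis unfolding square_free_def by auto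
qed

lemma ins_sf:
  assumes sf: "square_free (U@V)"
    and st: "\<forall>i<length (U@V). square_free (take i (U@V) @ drop (Suc i) (U@V))"
    and l: "U \<noteq> [] \<Longrightarrow> x \<noteq> last U" and h: "V \<noteq> [] \<Longrightarrow> x \<noteq> hd V"
  shows "square_free (U@x#V)"
proof -
  have delsf: "square_free (A@B)" if "U@V = A@y#B" for A y B
  proof -
    have "length A < length (U@V)" using arg_cong[OF that, of length] by simp
    with st have "square_free (take (length A) (U@V) @ drop (Suc (length A)) (U@V))" by blast
    thus ?thesis using that by (simp only: del_lem)
  qed
  have False if eq: "U@x#V = p@Y@Y@s" and Yne: "Y \<noteq> []" for p Y s
  proof -
    have Ut: "U = take (length U) (p@Y@Y@s)" using arg_cong[OF eq, of "take (length U)"] by simp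
    have Vd: "x#V = drop (length U) (p@Y@Y@s)" using arg_cong[OF eq, of "drop (length U)"] by simp
    show False
    proof (cases "length p + 2*length Y \<le> length U")
      case True
      hence "U = p@Y@Y@take (length U - (length p + length Y + length Y)) s" using Ut by simp
      hence "U@V = p@Y@Y@(take (length U - (length p + length Y + length Y)) s @ V)" by simp
      thus False using sf sq_fac[OF Yne] by blast
    next
      case c1: False
      show False
      proof (cases "length p > length U")
        case True
        hence "x#V = drop (length U) p @ Y@Y@s" using Vd by simp
        moreover obtain z q where "drop (length U) p = z#q" using True
          by (cases "drop (length U) p") auto
        ultimately have "V = q@Y@Y@s" by simp
        hence "U@V = (U@q)@Y@Y@s" by simp
        thus False using sf sq_fac[OF Yne] by blast
      next
        case c2: False
        show False
        proof (cases "length U < length p + length Y")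
          case True
          define k where "k = length U - length p"
          have kl: "k < length Y" using True c2 k_def by simp
          define y1 where "y1 = take k Y"
          define y2 where "y2 = drop (Suc k) Y"
          have Ysp: "Y = y1 @ Y!k # y2" using kl y1_def y2_def by (simp add: id_take_nth_drop)
          have U1: "U = p @ y1" using Ut c2 True k_def y1_def by simp
          have "x#V = drop k Y @ Y @ s" using Vd c2 True k_def by simp
          also have "drop k Y = Y!k # y2" using kl y2_def by (simp add: Cons_nth_drop_Suc)
          finally have xk: "x = Y!k" and V1: "V = y2 @ Y @ s" by auto
          have "U@V = (p@y1@y2@y1) @ x # (y2@s)" using U1 V1 Ysp xk
            by simp
          hence "square_free ((p@y1@y2@y1) @ (y2@s))" using delsf by blast
          hence e: "y1@y2 = []" using sq_fac[of "y1@y2" _ p s] by auto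
          hence "V = x # s" using V1 Ysp xk by simp
          thus False using h by simp
        next
          case False
          define k where "k = length U - length p - length Y"
          have kl: "k < length Y" using False c1 c2 k_def by simp
          define y1 where "y1 = take k Y"
          define y2 where "y2 = drop (Suc k) Y"
          have Ysp: "Y = y1 @ Y!k # y2" using kl y1_def y2_def by (simp add: id_take_nth_drop)
          have U1: "U = p @ Y @ y1" using Ut c2 False c1 k_def y1_def by simp
          have "x#V = drop k Y @ s" using Vd c2 False c1 k_def by simp
          also have "drop k Y = Y!k # y2" using kl y2_def by (simp add: Cons_nth_drop_Suc)
          finally have xk: "x = Y!k" and V1: "V = y2 @ s" by auto
          have "U@V = (p@y1) @ x # (y2@y1@y2@s)" using U1 V1 Ysp xk
            by simp
          hence "square_free ((p@y1) @ (y2@y1@y2@s))" using delsf by blast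
          hence e: "y1@y2 = []" using sq_fac[of "y1@y2" _ p s] by auto
          hence "U = p @ [x]" using U1 Ysp xk by simp
          thus False using l by simp
        qed
      qed
    qed
  qed
  note key = this
  show ?thesis unfolding square_free_def
  proof
    assume "\<exists>u. is_factor u (U@x#V) \<and> is_square u"
    then obtain u where f: "is_factor u (U@x#V)" and q: "is_square u" by blast
    from f obtain p s where e1: "U@x#V = p@u@s" unfolding is_factor_def by blast
    from q obtain Y where Y: "Y \<noteq> []" "u = Y@Y" unfolding is_square_def by blast
    show False using key[of p Y s] e1 Y by simp
  qed
qed

theorem mainTheorem4:
  fixes A :: "'a set" and w :: "'a list"
  assumes "\<exists>a\<in>A. \<exists>b\<in>A. \<exists>c\<in>A. a \<noteq> b \<and> a \<noteq> c \<and> b \<noteq> c"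
    and "set w \<subseteq> A"
    and "steady w"
  shows "bifurcate A w"
  unfolding bifurcate_def
proof (intro conjI allI impI)
  show "square_free w" using assms(3) steady_def by blast
next
  fix i assume i: "i \<le> length w"
  obtain a b c where abc: "a\<in>A" "b\<in>A" "c\<in>A" "a \<noteq> b" "a \<noteq> c" "b \<noteq> c" using assms(1) by blast
  define U where "U = take i w"
  define V where "V = drop i w"
  have w: "w = U@V" using U_def V_def by simp
  have "\<exists>x\<in>A. x \<noteq> last U \<and> x \<noteq> hd V"
  proof (cases "a \<noteq> last U \<and> a \<noteq> hd V")
    case True thus ?thesis using abc(1) by blast
  next
    case F1: False
    show ?thesis
    proof (cases "b \<noteq> last U \<and> b \<noteq> hd V")
      case True thus ?thesis using abc(2) by blast
    next
      case False
      hence "c \<noteq> last U \<and> c \<noteq> hd V" using F1 abc(4,5,6) by metis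
      thus ?thesis using abc(3) by blast
    qed
  qed
  then obtain x where x: "x \<in> A" "x \<noteq> last U" "x \<noteq> hd V" by blast
  have sf1: "square_free (U@V)" using assms(3) w unfolding steady_def by simp
  have st1: "\<forall>i<length (U@V). square_free (take i (U@V) @ drop (Suc i) (U@V))"
    using assms(3) w unfolding steady_def by simp
  have "square_free (U@x#V)"
    by (rule ins_sf[OF sf1 st1]) (use x in auto)
  moreover have "extension w i x = U@x#V"
    using i unfolding extension_def P_def S_def U_def V_def by simp
  ultimately show "\<exists>x\<in>A. square_free (extension w i x)" using x(1) by (intro bexI[of _ x]) simp_all
qed

end
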